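(* Let $a_1,\dots,a_8$ be pairwise distinct positive reals and let $$\mathscr H_{\mathrm{small}}=\{P^{(0)}_1(a_i): i=1,\dots,4\}\cup\{P^{(1)}_2(a_i,0): i=5,\dots,8\}.$$ If the simple one-layer GNN with parameters $w_2,W_{11},W_{12},b_1,b_2$ satisfies $h^{(1)}_u(G)=x_u(\Gamma(G))$ for every $G\in\mathscr H_{\mathrm{small}}$ and every $u\in V(G)$, then $w_2W_{11}=w_2W_{12}=1$ and $w_2b_1+b_2=0$.
   Context: Attributed graphs: $G=(V,E,X_{\mathrm v},X_{\mathrm e})$ with $V$ finite, $E$ a set of undirected edges, nonnegative edge weights $x_{(u,v)}=x_{(v,u)}\ge 0$ and nonnegative real node features $x_v$. Every node carries a self-loop of weight $x_{(v,v)}=0$, and $\mathcal N(v)=\{v\}\cup\{u:\{u,v\}\in E\}$. A constant $\beta>0$ (larger than all sums of edge weights considered) encodes "infinite distance". $x_v(H)$ denotes the feature of node $v$ in graph $H$. The Bellman–Ford operator $\Gamma$ sends $G$ to the graph with the same vertices, edges and edge weights and node features $x'_v=\min\{x_u+x_{(u,v)}:u\in\mathcal N(v)\}$. For a source $s$, $\mathrm d^{(t)}(s,v)$ is the minimal total weight of a walk from $s$ to $v$ with at most $t$ edges, or $\beta$ if none exists. $P^{(t)}_k(a_1,\dots,a_k)$ is the path graph with vertices $v_0,\dots,v_k$, edges $\{v_{i-1},v_i\}$ of weight $a_i$, and node features $x_{v_i}=\mathrm d^{(t)}(v_0,v_i)$. Simple one-layer GNN: with $\sigma(z)=\max(z,0)$,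 $$h^{(1)}_v(G)=\sigma\Big(w_2\min_{u\in\mathcal N(v)}\sigma\big(W_{11}x_u+W_{12}x_{(u,v)}+b_1\big)+b_2\Big).$$ *)

theory Defs
  imports Main "HOL.Real"
begin

text \<open>Attributed graphs with natural-number vertices, undirected edges (2-element sets),
  edge weights (symmetric) and real node features.\<close>
record agraph =
  verts :: "nat set"
  edges :: "nat set set"
  ew    :: "nat \<Rightarrow> nat \<Rightarrow> real"
  nf    :: "nat \<Rightarrow> real"

definition wt :: "agraph \<Rightarrow> nat \<Rightarrow> nat \<Rightarrow> real" where
  "wt G u v = (if u = v then 0 else ew G u v)"

definition nbhd :: "agraph \<Rightarrow> nat \<Rightarrow> nat set" where
  "nbhd G v = {v} \<union> {u. {u, v} \<in> edges G}"

definition BF :: "agraph \<Rightarrow> agraph" where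
  "BF G = G\<lparr>nf := (\<lambda>v. Min ((\<lambda>u. nf G u + wt G u v) ` nbhd G v))\<rparr>"

definition is_walk :: "agraph \<Rightarrow> nat list \<Rightarrow> bool" where
  "is_walk G ps \<longleftrightarrow> ps \<noteq> [] \<and> set ps \<subseteq> verts G \<and>
     (\<forall>i. Suc i < length ps \<longrightarrow> {ps ! i, ps ! Suc i} \<in> edges G)"

definition walk_weight :: "agraph \<Rightarrow> nat list \<Rightarrow> real" where
  "walk_weight G ps = (\<Sum>i<length ps - 1. ew G (ps ! i) (ps ! Suc i))"

definition walks_le :: "agraph \<Rightarrow> nat \<Rightarrow> nat \<Rightarrow> nat \<Rightarrow> nat list set" where
  "walks_le G t s v = {ps. is_walk G ps \<and> hd ps = s \<and> last ps = v \<and> length ps \<le> Suc t}"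

text \<open>d^(t)(s,v), with beta encoding infinite distance.\<close>
definition dist :: "real \<Rightarrow> nat \<Rightarrow> agraph \<Rightarrow> nat \<Rightarrow> nat \<Rightarrow> real" where
  "dist \<beta> t G s v = (if walks_le G t s v = {} then \<beta>
                      else Min (walk_weight G ` walks_le G t s v))"

text \<open>Underlying path graph on v_0..v_k (vertex i = v_i) with edge {v_(i-1), v_i} of
  weight as!(i-1), where k = length as; node features are placeholders.\<close>
definition path_base :: "real list \<Rightarrow> agraph" where
  "path_base as = \<lparr> verts = {0..length as},
      edges = {{i, Suc i} | i. i < length as},
      ew = (\<lambda>u v. if v = Suc u \<and> u < length as then as ! u
                  else if u = Suc v \<and> v < length as then as ! v else 0),
      nf = (\<lambda>_. 0) \<rparr>"

definition path_graph :: "real \<Rightarrow> nat \<Rightarrow> real list \<Rightarrow> agraph" where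
  "path_graph \<beta> t as = (path_base as)\<lparr>nf := (\<lambda>v. dist \<beta> t (path_base as) 0 v)\<rparr>"

definition relu :: "real \<Rightarrow> real" where
  "relu z = max z 0"

definition gnn1 :: "real \<Rightarrow> real \<Rightarrow> real \<Rightarrow> real \<Rightarrow> real \<Rightarrow> agraph \<Rightarrow> nat \<Rightarrow> real" where
  "gnn1 w2 W11 W12 b1 b2 G v =
     relu (w2 * Min ((\<lambda>u. relu (W11 * nf G u + W12 * wt G u v + b1)) ` nbhd G v) + b2)"

end

theory Submission imports Defs begin

lemma edges1: "edges (path_base [a]) = {{0,1}}"
  unfolding path_base_def by auto
lemma edges2: "edges (path_base [a,b]) = {{0,1},{1,2}}"
  unfolding path_base_def by (auto simp: less_Suc_eq)
lemma verts1: "verts (path_base [a]) = {0..1}" by (simp add: path_base_def)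
lemma verts2: "verts (path_base [a,b]) = {0..2}" by (simp add: path_base_def)

lemma short_list: "ps \<noteq> [] \<Longrightarrow> length ps \<le> 2 \<Longrightarrow> (\<exists>p. ps = [p]) \<or> (\<exists>p q. ps = [p,q])"
  by (cases ps; cases "tl ps"; auto)

lemma len1: "ps \<noteq> [] \<Longrightarrow> length ps \<le> Suc 0 \<Longrightarrow> ps = [hd ps]"
  by (cases ps) auto
lemma W1a: "walks_le (path_base [a]) 0 0 0 = {[0]}"
  unfolding walks_le_def is_walk_def
  by (auto simp: verts1 edges1 dest: len1 intro: len1)
lemma W1b: "walks_le (path_base [a]) 0 0 1 = {}"
  unfolding walks_le_def is_walk_def
  by (auto simp: verts1 edges1 dest!: len1)
lemma W2a: "walks_le (path_base [a,b]) 1 0 1 = {[0,1]}"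
proof (rule set_eqI, rule iffI)
  fix ps assume "ps \<in> walks_le (path_base [a,b]) 1 0 1"
  then have h: "ps \<noteq> []" "length ps \<le> 2" "hd ps = 0" "last ps = 1"
     "\<forall>i. Suc i < length ps \<longrightarrow> {ps ! i, ps ! Suc i} \<in> {{0,1},{1,2}}"
    unfolding walks_le_def is_walk_def by (auto simp: edges2)
  from short_list[OF h(1,2)] show "ps \<in> {[0,1]}"
    using h by (auto simp: doubleton_eq_iff)
next
  fix ps assume "ps \<in> {[0::nat,1]}"
  then show "ps \<in> walks_le (path_base [a,b]) 1 0 1"
    unfolding walks_le_def is_walk_def by (auto simp: verts2 edges2 less_Suc_eq)
qed
lemma W2b: "walks_le (path_base [a,b]) 1 0 2 = {}"
proof (rule ccontr)
  assume "walks_le (path_base [a,b]) 1 0 2 \<noteq> {}"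
  then obtain ps where "ps \<in> walks_le (path_base [a,b]) 1 0 2" by blast
  then have h: "ps \<noteq> []" "length ps \<le> 2" "hd ps = 0" "last ps = 2"
     "\<forall>i. Suc i < length ps \<longrightarrow> {ps ! i, ps ! Suc i} \<in> {{0,1},{1,2}}"
    unfolding walks_le_def is_walk_def by (auto simp: edges2)
  from short_list[OF h(1,2)] show False
    using h by (auto simp: doubleton_eq_iff)
qed

lemma nb1: "nbhd (path_base [a]) 1 = {0,1}"
  unfolding nbhd_def edges1 by (auto simp: doubleton_eq_iff)
lemma nb2: "nbhd (path_base [a,b]) 2 = {1,2}"
  unfolding nbhd_def edges2 by (auto simp: doubleton_eq_iff)

lemma pg_simps: "verts (path_graph \<beta> t as) = verts (path_base as)"
  "edges (path_graph \<beta> t as) = edges (path_base as)"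
  "ew (path_graph \<beta> t as) = ew (path_base as)"
  "nf (path_graph \<beta> t as) = (\<lambda>v. dist \<beta> t (path_base as) 0 v)"
  by (simp_all add: path_graph_def)
lemma BF_nf: "nf (BF G) v = Min ((\<lambda>u. nf G u + wt G u v) ` nbhd G v)"
  by (simp add: BF_def)
lemma nbhd_pg: "nbhd (path_graph \<beta> t as) v = nbhd (path_base as) v"
  by (simp add: nbhd_def pg_simps)
lemma wt_pg: "wt (path_graph \<beta> t as) u v = wt (path_base as) u v"
  by (simp add: wt_def pg_simps)
lemma ew1: "ew (path_base [x]) 0 1 = x" by (simp add: path_base_def)
lemma ew2: "ew (path_base [x,y]) 1 2 = y" by (simp add: path_base_def)

lemma G1: assumes "0 < x" "x < \<beta>"
  shows "gnn1 w2 W11 W12 b1 b2 (path_graph \<beta> 0 [x]) 1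
     = relu (w2 * min (relu (W12 * x + b1)) (relu (W11 * \<beta> + b1)) + b2)"
    "nf (BF (path_graph \<beta> 0 [x])) 1 = x"
    "1 \<in> verts (path_graph \<beta> 0 [x])"
proof -
  let ?G = "path_graph \<beta> 0 [x]"
  have n: "nbhd ?G 1 = {0,1}" unfolding nbhd_pg nb1 ..
  have d0: "nf ?G 0 = 0" by (simp add: pg_simps dist_def W1a walk_weight_def)
  have d1: "nf ?G 1 = \<beta>" unfolding pg_simps dist_def W1b by simp
  have w0: "wt ?G 0 1 = x" by (simp add: wt_def pg_simps path_base_def)
  have w1: "wt ?G 1 1 = 0" by (simp add: wt_def)
  show "gnn1 w2 W11 W12 b1 b2 ?G 1
     = relu (w2 * min (relu (W12 * x + b1)) (relu (W11 * \<beta> + b1)) + b2)"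
    unfolding gnn1_def n by (simp only: image_insert image_empty Min_insert2 d0 d1 w0 w1 Min_singleton finite.intros) simp
  show "nf (BF ?G) 1 = x" unfolding BF_nf n 
    by (simp only: image_insert image_empty d0 d1 w0 w1) (use assms in \<open>auto simp: min_def\<close>)
  show "1 \<in> verts ?G" by (simp add: pg_simps verts1)
qed

lemma G2: assumes "0 < x" "x < \<beta>"
  shows "gnn1 w2 W11 W12 b1 b2 (path_graph \<beta> 1 [x,0]) 2
     = relu (w2 * min (relu (W11 * x + b1)) (relu (W11 * \<beta> + b1)) + b2)"
    "nf (BF (path_graph \<beta> 1 [x,0])) 2 = x"
    "2 \<in> verts (path_graph \<beta> 1 [x,0])"
proof -
  let ?G = "path_graph \<beta> 1 [x,0]"
  have n: "nbhd ?G 2 = {1,2}" unfolding nbhd_pg nb2 ..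
  have d0: "nf ?G 1 = x" unfolding pg_simps dist_def W2a by (simp add: walk_weight_def path_base_def)
  have d1: "nf ?G 2 = \<beta>" unfolding pg_simps dist_def W2b by simp
  have w0: "wt ?G 1 2 = 0" by (simp add: wt_def pg_simps path_base_def)
  have w1: "wt ?G 2 2 = 0" by (simp add: wt_def)
  show "gnn1 w2 W11 W12 b1 b2 ?G 2
     = relu (w2 * min (relu (W11 * x + b1)) (relu (W11 * \<beta> + b1)) + b2)"
    unfolding gnn1_def n by (simp only: image_insert image_empty d0 d1 w0 w1) simp
  show "nf (BF ?G) 2 = x" unfolding BF_nf n 
    by (simp only: image_insert image_empty d0 d1 w0 w1) (use assms in \<open>auto simp: min_def\<close>)
  show "2 \<in> verts ?G" by (simp add: pg_simps verts2)
qed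
lemma two_lin:
  fixes x y K c w2 b1 b2 :: real
  assumes "relu (w2 * min (relu (K*x+b1)) c + b2) = x" "relu (w2 * min (relu (K*y+b1)) c + b2) = y"
    "x \<noteq> y" "0 < x" "0 < y" "0 < K*x+b1" "K*x+b1 < c" "0 < K*y+b1" "K*y+b1 < c"
  shows "w2*K = 1 \<and> w2*b1+b2 = 0"
proof -
  have ex: "w2 * (K*x+b1) + b2 = x" using assms by (auto simp: relu_def max_def min_def split: if_splits)
  have ey: "w2 * (K*y+b1) + b2 = y" using assms by (auto simp: relu_def max_def min_def split: if_splits)
  have "(w2*K) * (x - y) = 1 * (x - y)" using ex ey by (simp add: algebra_simps)
  then have k: "w2*K = 1" using assms(3) by simp
  have "(w2*K)*x + (w2*b1 + b2) = x" using ex by (simp add: algebra_simps)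
  then show ?thesis using k by simp
qed

lemma nonlin:
  fixes x K c b1 :: real
  assumes "c \<ge> 0" "\<not> (0 < K*x+b1 \<and> K*x+b1 < c)"
  shows "min (relu (K*x+b1)) c = 0 \<or> min (relu (K*x+b1)) c = c"
  using assms by (auto simp: relu_def max_def min_def)

lemma alg:
  fixes K c w2 b1 b2 :: real and x :: "nat \<Rightarrow> real" and I :: "nat set"
  assumes c: "c \<ge> 0" and I: "I = {p,q,r,s}" "distinct [p,q,r,s]" and inj: "inj_on x I"
    and pos: "\<forall>i\<in>I. 0 < x i"
    and H: "\<forall>i\<in>I. relu (w2 * min (relu (K*x i+b1)) c + b2) = x i"
  shows "w2*K = 1 \<and> w2*b1+b2 = 0"
proof -
  define g where "g i = min (relu (K*x i+b1)) c" for i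
  define L where "L i = (0 < K*x i+b1 \<and> K*x i+b1 < c)" for i
  have gd: "g i \<noteq> g j" if "i \<in> I" "j \<in> I" "i \<noteq> j" for i j
  proof
    assume "g i = g j"
    then have "x i = x j" using H that unfolding g_def by metis
    then show False using inj that by (meson inj_on_def)
  qed
  have nl: "\<not> L i \<Longrightarrow> g i = 0 \<or> g i = c" for i using nonlin[OF c] unfolding g_def L_def by blast
  have tl: "w2*K = 1 \<and> w2*b1+b2 = 0" if "i \<in> I" "j \<in> I" "i \<noteq> j" "L i" "L j" for i j
  proof -
    have "x i \<noteq> x j" using inj that by (meson inj_on_def)
    then show ?thesis using two_lin[of w2 K "x i" b1 c b2 "x j"] H pos that unfolding L_def by blast
  qed
  have "\<exists>i\<in>I. \<exists>j\<in>I. i \<noteq> j \<and> L i \<and> L j"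
  proof (rule ccontr)
    assume A: "\<not> ?thesis"
    have pI: "p \<in> I" "q \<in> I" "r \<in> I" "s \<in> I" using I by auto
    have d: "p \<noteq> q" "p \<noteq> r" "p \<noteq> s" "q \<noteq> r" "q \<noteq> s" "r \<noteq> s" using I by auto
    show False
      using A pI d nl[of p] nl[of q] nl[of r] nl[of s] gd[of p q] gd[of p r] gd[of p s] gd[of q r] gd[of q s] gd[of r s]
      by metis
  qed
  then show ?thesis using tl by blast
qed
theorem mainTheorem2:
  fixes a :: "nat \<Rightarrow> real" and \<beta> w2 W11 W12 b1 b2 :: real
  assumes distinct: "inj_on a {1..8}"
    and pos: "\<forall>i\<in>{1..8}. a i > 0"
    and beta_pos: "\<beta> > 0"
    and beta_large: "\<forall>i\<in>{1..8}. a i < \<beta>"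
    and fit: "\<forall>G \<in> {path_graph \<beta> 0 [a i] | i. i \<in> {1..4}}
                 \<union> {path_graph \<beta> 1 [a i, 0] | i. i \<in> {5..8}}.
               \<forall>u \<in> verts G. gnn1 w2 W11 W12 b1 b2 G u = nf (BF G) u"
  shows "w2 * W11 = 1 \<and> w2 * W12 = 1 \<and> w2 * b1 + b2 = 0"
proof -
  define c where "c = relu (W11 * \<beta> + b1)"
  have c0: "c \<ge> 0" by (simp add: c_def relu_def)
  have H1: "\<forall>i\<in>{1,2,3,4::nat}. relu (w2 * min (relu (W12 * a i + b1)) c + b2) = a i"
  proof
    fix i :: nat assume i: "i \<in> {1,2,3,4}"
    then have i8: "i \<in> {1..8}" by auto
    have "path_graph \<beta> 0 [a i] \<in> {path_graph \<beta> 0 [a i] | i. i \<in> {1..4}}" using i by auto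
    then have "gnn1 w2 W11 W12 b1 b2 (path_graph \<beta> 0 [a i]) 1 = nf (BF (path_graph \<beta> 0 [a i])) 1"
      using fit G1(3)[of "a i" \<beta>] pos beta_large i8 by blast
    then show "relu (w2 * min (relu (W12 * a i + b1)) c + b2) = a i"
      using G1(1,2)[of "a i" \<beta>] pos beta_large i8 unfolding c_def by auto
  qed
  have H2: "\<forall>i\<in>{5,6,7,8::nat}. relu (w2 * min (relu (W11 * a i + b1)) c + b2) = a i"
  proof
    fix i :: nat assume i: "i \<in> {5,6,7,8}"
    then have i8: "i \<in> {1..8}" by auto
    have "path_graph \<beta> 1 [a i, 0] \<in> {path_graph \<beta> 1 [a i, 0] | i. i \<in> {5..8}}" using i by auto
    then have "gnn1 w2 W11 W12 b1 b2 (path_graph \<beta> 1 [a i, 0]) 2 = nf (BF (path_graph \<beta> 1 [a i, 0])) 2"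
      using fit G2(3)[of "a i" \<beta>] pos beta_large i8 by blast
    then show "relu (w2 * min (relu (W11 * a i + b1)) c + b2) = a i"
      using G2(1,2)[of "a i" \<beta>] pos beta_large i8 unfolding c_def by auto
  qed
  have inj1: "inj_on a {1,2,3,4}" by (rule inj_on_subset[OF distinct]) auto
  have inj2: "inj_on a {5,6,7,8}" by (rule inj_on_subset[OF distinct]) auto
  have r1: "w2*W12 = 1 \<and> w2*b1+b2 = 0"
    by (rule alg[OF c0, of "{1,2,3,4}" 1 2 3 4 a]) (use H1 pos inj1 in auto)
  have r2: "w2*W11 = 1 \<and> w2*b1+b2 = 0"
    by (rule alg[OF c0, of "{5,6,7,8}" 5 6 7 8 a]) (use H2 pos inj2 in auto)
  show ?thesis using r1 r2 by simp
qed
end
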